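(* Let $X\in\mathbb{R}^{m\times n}$ have nonnegative entries and let $A_1,\ldots,A_m,B_1,\ldots,B_n$ be $r\times r$ real symmetric positive definite matrices. Define the linear maps $\mathcal{A}:\mathbb{S}^r\to\mathbb{R}^m$, $Z\mapsto(\operatorname{tr}(A_1Z),\ldots,\operatorname{tr}(A_mZ))$ and $\mathcal{B}:\mathbb{S}^r\to\mathbb{R}^n$, $Z\mapsto(\operatorname{tr}(B_1Z),\ldots,\operatorname{tr}(B_nZ))$. Suppose these matrices are fixed points of the Matrix Multiplicative Update rule, i.e. $$A_i=V_i\,\mathcal{B}^\top(X_{i:})\,V_i,\quad V_i=([\mathcal{B}^\top\mathcal{B}](A_i))^{-1}\#A_i\qquad (i\in[m]),$$ $$B_j=W_j\,\mathcal{A}^\top(X_{:j})\,W_j,\quad W_j=([\mathcal{A}^\top\mathcal{A}](B_j))^{-1}\#B_j\qquad (j\in[n]).$$ Then they satisfy the (reduced) KKT conditions of the problem $\inf\sum_{i,j}(X_{ij}-\operatorname{tr}(A_iB_j))^2$ over $A_i,B_j\in\mathbb{S}^r_+$, namely $$\mathcal{B}^\top(X_{i:})=[\mathcal{B}^\top\mathcal{B}](A_i)\ \ (i\in[m]),\qquad \mathcal{A}^\top(X_{:j})=[\mathcal{A}^\top\mathcal{A}](B_j)\ \ (j\in[n]).$$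
   Context: $\mathbb{S}^r$ denotes the space of $r\times r$ real symmetric matrices and $\mathbb{S}^r_+$ the cone of positive semidefinite ones. $X_{i:}\in\mathbb{R}^n$ is the $i$-th row and $X_{:j}\in\mathbb{R}^m$ the $j$-th column of $X$. Adjoints: $\mathcal{A}^\top(y)=\sum_i y_iA_i$, $\mathcal{B}^\top(z)=\sum_j z_jB_j$; thus $[\mathcal{A}^\top\mathcal{A}](Z)=\sum_i\operatorname{tr}(A_iZ)A_i$ and $[\mathcal{B}^\top\mathcal{B}](Z)=\sum_j\operatorname{tr}(B_jZ)B_j$. For positive definite $C,D$, $C\# D=C^{1/2}(C^{-1/2}DC^{-1/2})^{1/2}C^{1/2}$ is the matrix geometric mean. *)

theory Defs
  imports "HOL-Analysis.Analysis"
begin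

definition sym_mat :: "real^'r^'r \<Rightarrow> bool" where
  "sym_mat C \<longleftrightarrow> transpose C = C"

definition pos_def :: "real^'r^'r \<Rightarrow> bool" where
  "pos_def C \<longleftrightarrow> sym_mat C \<and> (\<forall>x. x \<noteq> 0 \<longrightarrow> x \<bullet> (C *v x) > 0)"

definition pos_semidef :: "real^'r^'r \<Rightarrow> bool" where
  "pos_semidef C \<longleftrightarrow> sym_mat C \<and> (\<forall>x. x \<bullet> (C *v x) \<ge> 0)"

definition msqrt :: "real^'r^'r \<Rightarrow> real^'r^'r" where
  "msqrt C = (THE S. pos_semidef S \<and> S ** S = C)"

definition geo_mean :: "real^'r^'r \<Rightarrow> real^'r^'r \<Rightarrow> real^'r^'r" where
  "geo_mean C D = msqrt C ** msqrt (matrix_inv (msqrt C) ** D ** matrix_inv (msqrt C)) ** msqrt C"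

text \<open>Adjoint of Z \<mapsto> (tr(M_k Z))_k : y \<mapsto> sum_k y_k M_k.\<close>
definition adj_op :: "('k::finite \<Rightarrow> real^'r^'r) \<Rightarrow> ('k \<Rightarrow> real) \<Rightarrow> real^'r^'r" where
  "adj_op M y = (\<Sum>k\<in>UNIV. y k *\<^sub>R M k)"

definition gram_op :: "('k::finite \<Rightarrow> real^'r^'r) \<Rightarrow> real^'r^'r \<Rightarrow> real^'r^'r" where
  "gram_op M Z = (\<Sum>k\<in>UNIV. trace (M k ** Z) *\<^sub>R M k)"

end

theory Submission
  imports Defs
begin


lemma inner_mat: "x \<bullet> (A *v y) = (transpose A *v x) \<bullet> (y::real^'n)"
  by (metis dot_lmul_matrix transpose_transpose vector_transpose_matrix)

lemma sym_inner: "sym_mat A \<Longrightarrow> x \<bullet> (A *v y) = (A *v x) \<bullet> (y::real^'n)"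
  by (simp add: inner_mat sym_mat_def)

lemma sym_matI:
  fixes A :: "real^'n^'n"
  assumes "\<And>x y. x \<bullet> (A *v y) = (A *v x) \<bullet> y"
  shows "sym_mat A"
proof -
  have "transpose A *v x = A *v x" for x
  proof -
    have "(transpose A *v x - A *v x) \<bullet> y = 0" for y
      using assms[of x y] by (simp add: inner_mat inner_diff_left)
    from this[of "transpose A *v x - A *v x"] show ?thesis by simp
  qed
  then show ?thesis unfolding sym_mat_def by (simp add: matrix_eq)
qed

lemma inv_props:
  fixes A :: "real^'n^'n"
  assumes "invertible A"
  shows "A ** matrix_inv A = mat 1" "matrix_inv A ** A = mat 1"
proof -
  have "\<exists>A'. A ** A' = mat 1 \<and> A' ** A = mat 1" using assms invertible_def by blast
  then have "A ** matrix_inv A = mat 1 \<and> matrix_inv A ** A = mat 1"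
    unfolding matrix_inv_def by (rule someI_ex)
  then show "A ** matrix_inv A = mat 1" "matrix_inv A ** A = mat 1" by auto
qed

lemma invertible_inv: "invertible (A::real^'n^'n) \<Longrightarrow> invertible (matrix_inv A)"
  using inv_props invertible_def by blast

lemma inv_unique: "(A::real^'n^'n) ** B = mat 1 \<Longrightarrow> matrix_inv A = B"
proof -
  assume h: "A ** B = mat 1"
  then have inv: "invertible A" using invertible_right_inverse by blast
  have "matrix_inv A = matrix_inv A ** (A ** B)" using h by simp
  also have "\<dots> = B" using inv_props(2)[OF inv] by (simp add: matrix_mul_assoc)
  finally show ?thesis .
qed

lemma invertible_ker: "invertible (A::real^'n^'n) \<longleftrightarrow> (\<forall>x. A *v x = 0 \<longrightarrow> x = 0)"
  using invertible_left_inverse matrix_left_invertible_ker by blast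

lemma transpose_inv: "invertible (A::real^'n^'n) \<Longrightarrow> transpose (matrix_inv A) = matrix_inv (transpose A)"
  by (metis inv_props(2) inv_unique matrix_transpose_mul transpose_mat)

lemma sym_inv: "sym_mat (A::real^'n^'n) \<Longrightarrow> invertible A \<Longrightarrow> sym_mat (matrix_inv A)"
  by (simp add: sym_mat_def transpose_inv)

lemma psd_zero: 
  fixes S :: "real^'n^'n"
  assumes "pos_semidef S" "x \<bullet> (S *v x) = 0" shows "S *v x = 0"
proof -
  have sym: "sym_mat S" and nn: "\<And>y. y \<bullet> (S *v y) \<ge> 0" using assms(1) pos_semidef_def by auto
  define z where "z = S *v x"
  have "0 \<le> (x - t *\<^sub>R z) \<bullet> (S *v (x - t *\<^sub>R z))" for t using nn by blast
  also have "(x - t *\<^sub>R z) \<bullet> (S *v (x - t *\<^sub>R z)) = x \<bullet> (S *v x) - 2 * t * (z \<bullet> z) + t^2 * (z \<bullet> (S *v z))" for t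
  proof -
    have e: "x \<bullet> (S *v z) = z \<bullet> z" using sym_inner[OF sym, of x z] by (simp add: z_def)
    have "(x - t *\<^sub>R z) \<bullet> (S *v (x - t *\<^sub>R z)) = x \<bullet> (S *v x) - t * (x \<bullet> (S *v z)) - t * (z \<bullet> z) + t * t * (z \<bullet> (S *v z))"
      apply (simp add: matrix_vector_mult_diff_distrib matrix_vector_mult_scaleR inner_diff_left inner_diff_right z_def[symmetric] inner_commute)
      apply (simp add: algebra_simps)
      done
    then show ?thesis using e by (simp add: power2_eq_square)
  qed
  finally have h: "0 \<le> - 2 * t * (z \<bullet> z) + t^2 * (z \<bullet> (S *v z))" for t using assms(2) by simp
  show ?thesis
  proof (rule ccontr)
    assume "S *v x \<noteq> 0"
    then have zz: "z \<bullet> z > 0" by (simp add: z_def)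
    define q where "q = z \<bullet> (S *v z)"
    have q0: "q \<ge> 0" using nn q_def by simp
    define t where "t = (z \<bullet> z) / (q + 1)"
    have "0 \<le> - 2 * t * (z \<bullet> z) + t^2 * q" using h[of t] q_def by simp
    moreover have "- 2 * t * (z \<bullet> z) + t^2 * q < 0"
    proof -
      have "t > 0" using zz q0 t_def by simp
      have "t * q < z \<bullet> z" using zz q0 unfolding t_def by (simp add: field_simps)
      then have "t^2 * q < t * (z \<bullet> z)" using \<open>t > 0\<close> by (simp add: power2_eq_square)
      moreover have "t * (z \<bullet> z) > 0" using \<open>t>0\<close> zz by simp
      ultimately show ?thesis by linarith
    qed
    ultimately show False by simp
  qed
qed



definition eigb :: "real^'n^'n \<Rightarrow> (real^'n) set \<Rightarrow> bool" where
  "eigb C B \<longleftrightarrow> finite B \<and> pairwise orthogonal B \<and>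
     (\<forall>u\<in>B. norm u = 1 \<and> C *v u = (u \<bullet> (C *v u)) *\<^sub>R u)"

lemma quad_zero:
  fixes a q :: real
  assumes h: "\<And>t. 0 \<le> -2*t*a + t^2 * q" shows "a = 0"
proof (rule ccontr)
  assume a: "a \<noteq> 0"
  define s where "s = \<bar>q\<bar> + 1"
  have s0: "s > 0" by (simp add: s_def)
  have "0 \<le> (-2*(a/s)*a + (a/s)^2 * q) * s^2" using h[of "a/s"] by simp
  also have "\<dots> = a * a * (q - 2 * s)"
    using s0 by (simp add: field_simps power2_eq_square)
  finally have "0 \<le> a * a * (q - 2 * s)" .
  moreover have "a * a > 0" using a not_real_square_gt_zero by metis
  moreover have "q - 2 * s < 0" by (simp add: s_def)
  ultimately show False using mult_pos_neg[of "a * a" "q - 2 * s"] by linarith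
qed


lemma spectral_sub:
  fixes C :: "real^'n^'n"
  assumes sym: "sym_mat C"
  shows "subspace U \<Longrightarrow> (\<forall>x\<in>U. C *v x \<in> U) \<Longrightarrow> \<exists>B. B \<subseteq> U \<and> eigb C B \<and> span B = U"
proof (induction "dim U" arbitrary: U rule: less_induct)
  case less
  show ?case
  proof (cases "U = {0}")
    case True
    then show ?thesis by (intro exI[of _ "{}"]) (auto simp: eigb_def)
  next
    case False
    then obtain y where y: "y \<in> U" "y \<noteq> 0" using less.prems(1) subspace_0 by blast
    define K where "K = U \<inter> sphere (0::real^'n) 1"
    have "compact K" unfolding K_def using closed_subspace[OF less.prems(1)] by (intro closed_Int_compact) auto
    moreover have "K \<noteq> {}"
    proof -
      have "y /\<^sub>R norm y \<in> K" using y less.prems(1) by (auto simp: K_def subspace_scale)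
      then show ?thesis by blast
    qed
    moreover have "continuous_on K (\<lambda>x. x \<bullet> (C *v x))"
      by (intro continuous_on_inner continuous_on_id matrix_vector_mult_linear_continuous_on)
    ultimately have "\<exists>x\<in>K. \<forall>z\<in>K. z \<bullet> (C *v z) \<le> x \<bullet> (C *v x)"
      by (rule continuous_attains_sup)
    then obtain x0 where x0K: "x0 \<in> K" and x0max: "\<And>z. z \<in> K \<Longrightarrow> z \<bullet> (C *v z) \<le> x0 \<bullet> (C *v x0)"
      by blast
    define l where "l = x0 \<bullet> (C *v x0)"
    have x0U: "x0 \<in> U" and nx0: "norm x0 = 1" using x0K by (auto simp: K_def)
    have x0x0: "x0 \<bullet> x0 = 1" using nx0 by (simp add: dot_square_norm)
    have ray: "z \<bullet> (C *v z) \<le> l * (z \<bullet> z)" if "z \<in> U" for z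
    proof (cases "z = 0")
      case True then show ?thesis by simp
    next
      case False
      have "(z /\<^sub>R norm z) \<in> K" using that False less.prems(1) by (auto simp: K_def subspace_scale)
      then have "(z /\<^sub>R norm z) \<bullet> (C *v (z /\<^sub>R norm z)) \<le> l" using x0max unfolding l_def by blast
      then have "(z \<bullet> (C *v z)) / (norm z)^2 \<le> l"
        by (simp add: matrix_vector_mult_scaleR power2_eq_square divide_inverse mult.commute mult.left_commute)
      then show ?thesis using False by (simp add: divide_le_eq dot_square_norm mult.commute)
    qed
    have b0: "l * (x0 \<bullet> z) - x0 \<bullet> (C *v z) = 0" if zU: "z \<in> U" for z
    proof (rule quad_zero)
      fix t :: real
      have "x0 - t *\<^sub>R z \<in> U" using zU x0U less.prems(1) by (simp add: subspace_diff subspace_scale)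
      from ray[OF this] have "0 \<le> l * ((x0 - t *\<^sub>R z) \<bullet> (x0 - t *\<^sub>R z)) - (x0 - t *\<^sub>R z) \<bullet> (C *v (x0 - t *\<^sub>R z))"
        by simp
      also have "\<dots> = -2*t*(l * (x0 \<bullet> z) - x0 \<bullet> (C *v z)) + t^2*(l * (z \<bullet> z) - z \<bullet> (C *v z))"
      proof -
        have e: "z \<bullet> (C *v x0) = x0 \<bullet> (C *v z)" using sym_inner[OF sym, of x0 z] by (simp add: inner_commute)
        show ?thesis
          apply (simp add: matrix_vector_mult_diff_distrib matrix_vector_mult_scaleR inner_diff_left inner_diff_right x0x0 l_def e inner_commute[of z x0])
          apply (simp add: algebra_simps power2_eq_square)
          done
      qed
      finally show "0 \<le> -2*t*(l * (x0 \<bullet> z) - x0 \<bullet> (C *v z)) + t^2*(l * (z \<bullet> z) - z \<bullet> (C *v z))" .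
    qed
    have eig: "C *v x0 = l *\<^sub>R x0"
    proof -
      define w where "w = l *\<^sub>R x0 - C *v x0"
      have wU: "w \<in> U" using x0U less.prems by (simp add: w_def subspace_diff subspace_scale)
      have "w \<bullet> z = 0" if "z \<in> U" for z
        using b0[OF that] sym_inner[OF sym, of x0 z] by (simp add: w_def inner_diff_left)
      from this[OF wU] have "w = 0" by simp
      then show ?thesis by (simp add: w_def)
    qed
    define U' where "U' = {z \<in> U. x0 \<bullet> z = 0}"
    have subU': "subspace U'" using less.prems(1) unfolding U'_def subspace_def
      by (auto simp: inner_add_right)
    have invU': "\<forall>x\<in>U'. C *v x \<in> U'"
    proof
      fix x assume "x \<in> U'"
      then have "x \<in> U" "x0 \<bullet> x = 0" by (auto simp: U'_def)
      moreover have "x0 \<bullet> (C *v x) = (C *v x0) \<bullet> x" by (rule sym_inner[OF sym])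
      ultimately show "C *v x \<in> U'" using less.prems(2) eig by (simp add: U'_def)
    qed
    have "dim U' < dim U"
    proof (rule dim_psubset)
      have "U' \<subseteq> U" by (auto simp: U'_def)
      moreover have "x0 \<in> U - U'" using x0U x0x0 by (auto simp: U'_def)
      ultimately show "span U' \<subset> span U"
        using span_eq_iff subU' less.prems(1) by (metis Diff_iff psubsetI)
    qed
    from less.hyps[OF this subU' invU'] obtain B' where B': "B' \<subseteq> U'" "eigb C B'" "span B' = U'" by blast
    define B where "B = insert x0 B'"
    have "B \<subseteq> U" using B'(1) x0U by (auto simp: B_def U'_def)
    moreover have "eigb C B"
    proof -
      have "x0 \<bullet> u = 0" if "u \<in> B'" for u using that B'(1) by (auto simp: U'_def)
      then have "pairwise orthogonal B"
        using B'(2) unfolding eigb_def B_def pairwise_insert orthogonal_def by (auto simp: inner_commute)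
      moreover have "C *v x0 = (x0 \<bullet> (C *v x0)) *\<^sub>R x0" using eig l_def by simp
      ultimately show ?thesis using B'(2) nx0 by (auto simp: eigb_def B_def)
    qed
    moreover have "span B = U"
    proof (rule span_subspace)
      show "B \<subseteq> U" by fact
      show "subspace U" by fact
      show "U \<subseteq> span B"
      proof
        fix z assume zU: "z \<in> U"
        have "z - (x0 \<bullet> z) *\<^sub>R x0 \<in> U'"
          using zU x0U less.prems(1) x0x0 by (simp add: U'_def subspace_diff subspace_scale inner_diff_right)
        then have "z - (x0 \<bullet> z) *\<^sub>R x0 \<in> span B" using B'(3) span_mono[of B' B] by (auto simp: B_def)
        moreover have "(x0 \<bullet> z) *\<^sub>R x0 \<in> span B" by (simp add: B_def span_base span_scale)
        ultimately have "(z - (x0 \<bullet> z) *\<^sub>R x0) + (x0 \<bullet> z) *\<^sub>R x0 \<in> span B" by (rule span_add)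
        then show "z \<in> span B" by simp
      qed
    qed
    ultimately show ?thesis by (intro exI[of _ B]) simp
  qed
qed



lemma spectral:
  fixes C :: "real^'n^'n"
  assumes "sym_mat C"
  obtains B where "eigb C B" "span B = UNIV"
  using spectral_sub[OF assms, of UNIV] by auto

lemma eigb_expand:
  assumes "eigb C B" "span B = UNIV"
  shows "(\<Sum>u\<in>B. (x \<bullet> u) *\<^sub>R u) = x"
  using assms orthonormal_basis_expand[of B x] by (auto simp: eigb_def)

lemma eigb_inner:
  assumes "eigb C B" "u \<in> B" "v \<in> B"
  shows "u \<bullet> v = (if u = v then 1 else 0)"
  using assms by (auto simp: eigb_def pairwise_def orthogonal_def dot_square_norm)

lemma eigb_coef:
  assumes "eigb C B" "u \<in> B"
  shows "u \<bullet> (\<Sum>w\<in>B. g w *\<^sub>R w) = g u"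
proof -
  have fin: "finite B" using assms(1) by (simp add: eigb_def)
  have "u \<bullet> (\<Sum>w\<in>B. g w *\<^sub>R w) = (\<Sum>w\<in>B. g w * (u \<bullet> w))"
    by (simp add: inner_sum_right)
  also have "\<dots> = (\<Sum>w\<in>B. if w = u then g w else 0)"
    by (rule sum.cong) (auto simp: eigb_inner[OF assms(1) assms(2)])
  also have "\<dots> = g u" using fin assms(2) by simp
  finally show ?thesis .
qed

lemma eigb_eig:
  assumes "eigb C B" "u \<in> B"
  shows "C *v u = (u \<bullet> (C *v u)) *\<^sub>R u"
  using assms by (auto simp: eigb_def)

lemma mv_sum: "(A::real^'n^'m) *v (\<Sum>u\<in>B. g u) = (\<Sum>u\<in>B. A *v g u)"
  using linear_sum[OF matrix_vector_mul_linear, of A g B] by (simp add: o_def)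

lemma sqrt_exists:
  fixes C :: "real^'n^'n"
  assumes psd: "pos_semidef C"
  shows "\<exists>S. pos_semidef S \<and> S ** S = C"
proof -
  have sym: "sym_mat C" using psd by (simp add: pos_semidef_def)
  obtain B where B: "eigb C B" "span B = UNIV" using spectral[OF sym] by blast
  define c where "c u = sqrt (u \<bullet> (C *v u))" for u
  define f where "f v = (\<Sum>u\<in>B. (c u * (u \<bullet> v)) *\<^sub>R u)" for v
  have lin: "linear f"
    by (rule linearI) (simp_all add: f_def inner_add_right distrib_left scaleR_add_left sum.distrib
        scaleR_sum_right mult.left_commute)
  define S where "S = matrix f"
  have Sv: "S *v v = f v" for v
    unfolding S_def using lin by (simp add: matrix_works linear_matrix_vector_mul_eq)
  have coef: "u \<bullet> (S *v v) = c u * (u \<bullet> v)" if "u \<in> B" for u v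
    unfolding Sv f_def by (rule eigb_coef[OF B(1) that])
  have l0: "u \<bullet> (C *v u) \<ge> 0" for u using psd by (simp add: pos_semidef_def)
  have "S ** S = C"
  proof (subst matrix_eq, intro allI)
    fix v
    have "(S ** S) *v v = f (S *v v)" by (simp add: Sv flip: matrix_vector_mul_assoc)
    also have "\<dots> = (\<Sum>u\<in>B. ((u \<bullet> (C *v u)) * (v \<bullet> u)) *\<^sub>R u)"
      unfolding f_def
      by (rule sum.cong) (auto simp: coef c_def l0 inner_commute mult.assoc[symmetric])
    also have "\<dots> = (\<Sum>u\<in>B. (v \<bullet> u) *\<^sub>R (C *v u))"
    proof (rule sum.cong)
      fix u assume u: "u \<in> B"
      have "(v \<bullet> u) *\<^sub>R (C *v u) = (v \<bullet> u) *\<^sub>R ((u \<bullet> (C *v u)) *\<^sub>R u)"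
        using eigb_eig[OF B(1) u] by (rule arg_cong)
      then show "((u \<bullet> (C *v u)) * (v \<bullet> u)) *\<^sub>R u = (v \<bullet> u) *\<^sub>R (C *v u)"
        by (simp add: mult.commute)
    qed simp
    also have "\<dots> = C *v (\<Sum>u\<in>B. (v \<bullet> u) *\<^sub>R u)" by (simp add: mv_sum matrix_vector_mult_scaleR)
    also have "\<dots> = C *v v" using eigb_expand[OF B, of v] by simp
    finally show "(S ** S) *v v = C *v v" .
  qed
  moreover have "pos_semidef S"
  proof -
    have ex: "x \<bullet> (S *v y) = (\<Sum>u\<in>B. c u * (u \<bullet> x) * (u \<bullet> y))" for x y
      by (simp add: Sv f_def inner_sum_right inner_commute mult.commute mult.left_commute)
    have "sym_mat S"
      by (rule sym_matI) (simp add: ex inner_commute[of "S *v _"] mult.commute mult.left_commute)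
    moreover have "x \<bullet> (S *v x) \<ge> 0" for x
      unfolding ex by (intro sum_nonneg) (simp add: c_def l0 mult.assoc)
    ultimately show ?thesis by (simp add: pos_semidef_def)
  qed
  ultimately show ?thesis by blast
qed



lemma sqrt_unique:
  fixes S T :: "real^'n^'n"
  assumes S: "pos_semidef S" and T: "pos_semidef T" and eq: "S ** S = T ** T"
  shows "S = T"
proof -
  define D where "D = S - T"
  have sS: "sym_mat S" and sT: "sym_mat T" using S T by (auto simp: pos_semidef_def)
  have symD: "sym_mat D"
    by (rule sym_matI) (simp add: D_def matrix_vector_mult_diff_rdistrib inner_diff_left inner_diff_right
        sym_inner[OF sS] sym_inner[OF sT])
  obtain B where B: "eigb D B" "span B = UNIV" using spectral[OF symD] by blast
  have Du: "D *v u = 0" if u: "u \<in> B" for u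
  proof -
    define d where "d = u \<bullet> (D *v u)"
    have eig: "D *v u = d *\<^sub>R u" using eigb_eig[OF B(1) u] by (simp add: d_def)
    have key: "S *v (D *v u) + D *v (T *v u) = 0"
    proof -
      have "S *v (D *v u) + D *v (T *v u) = S *v (S *v u) - T *v (T *v u)"
        by (simp add: D_def matrix_vector_mult_diff_distrib matrix_vector_mult_diff_rdistrib)
      also have "\<dots> = 0" by (simp add: matrix_vector_mul_assoc eq)
      finally show ?thesis .
    qed
    have "u \<bullet> (S *v (D *v u) + D *v (T *v u)) = d * (u \<bullet> (S *v u) + u \<bullet> (T *v u))"
    proof -
      have "u \<bullet> (D *v (T *v u)) = (D *v u) \<bullet> (T *v u)" by (rule sym_inner[OF symD])
      then show ?thesis using eig
        by (simp add: inner_add_right matrix_vector_mult_scaleR algebra_simps sym_inner[OF sT, of u u])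
    qed
    then have prod0: "d * (u \<bullet> (S *v u) + u \<bullet> (T *v u)) = 0" using key by simp
    show ?thesis
    proof (cases "d = 0")
      case True then show ?thesis using eig by simp
    next
      case False
      then have "u \<bullet> (S *v u) + u \<bullet> (T *v u) = 0" using prod0 by simp
      moreover have "u \<bullet> (S *v u) \<ge> 0" "u \<bullet> (T *v u) \<ge> 0" using S T by (auto simp: pos_semidef_def)
      ultimately have "u \<bullet> (S *v u) = 0" "u \<bullet> (T *v u) = 0" by linarith+
      then have "S *v u = 0" "T *v u = 0" using psd_zero S T by blast+
      then show ?thesis by (simp add: D_def matrix_vector_mult_diff_rdistrib)
    qed
  qed
  have "D *v v = 0" for v
  proof -
    have "D *v v = D *v (\<Sum>u\<in>B. (v \<bullet> u) *\<^sub>R u)" using eigb_expand[OF B, of v] by simp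
    also have "\<dots> = 0" by (simp add: mv_sum matrix_vector_mult_scaleR Du)
    finally show ?thesis .
  qed
  then have "D = 0" by (simp add: matrix_eq)
  then show ?thesis by (simp add: D_def)
qed

lemma msqrt:
  fixes C :: "real^'n^'n"
  assumes "pos_semidef C"
  shows "pos_semidef (msqrt C)" "msqrt C ** msqrt C = C"
proof -
  have "\<exists>!S. pos_semidef S \<and> S ** S = C"
    using sqrt_exists[OF assms] sqrt_unique by metis
  then have "pos_semidef (msqrt C) \<and> msqrt C ** msqrt C = C"
    unfolding msqrt_def by (rule theI')
  then show "pos_semidef (msqrt C)" "msqrt C ** msqrt C = C" by auto
qed



lemma pd_psd: "pos_def C \<Longrightarrow> pos_semidef C"
  unfolding pos_def_def pos_semidef_def by (metis inner_zero_left order_less_imp_le order_refl)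

lemma pd_invertible: "pos_def (C::real^'n^'n) \<Longrightarrow> invertible C"
  unfolding invertible_ker pos_def_def by (metis inner_zero_right less_irrefl)

lemma inv_cancel:
  fixes X Y :: "real^'n^'n"
  assumes "invertible X"
  shows "X ** (matrix_inv X ** Y) = Y" "matrix_inv X ** (X ** Y) = Y"
  using inv_props[OF assms] by (simp_all add: matrix_mul_assoc)

lemma pd_inv:
  fixes C :: "real^'n^'n"
  assumes "pos_def C" shows "pos_def (matrix_inv C)"
proof -
  have inv: "invertible C" using pd_invertible[OF assms] .
  have sC: "sym_mat C" using assms by (simp add: pos_def_def)
  have "x \<bullet> (matrix_inv C *v x) > 0" if "x \<noteq> 0" for x
  proof -
    define y where "y = matrix_inv C *v x"
    have Cy: "C *v y = x" using inv_props(1)[OF inv] by (simp add: y_def matrix_vector_mul_assoc)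
    then have "y \<noteq> 0" using that by auto
    then have "y \<bullet> (C *v y) > 0" using assms by (simp add: pos_def_def)
    then show ?thesis using Cy by (simp add: y_def[symmetric] inner_commute)
  qed
  then show ?thesis using sym_inv[OF sC inv] by (simp add: pos_def_def)
qed

lemma entry_axis: "(M::real^'n^'n) $ i $ j = axis i 1 \<bullet> (M *v axis j 1)"
  by (simp add: matrix_vector_mult_basis inner_axis' column_def)

lemma trace_pos:
  fixes A B :: "real^'n^'n"
  assumes A: "pos_def A" and B: "pos_def B"
  shows "trace (B ** A) > 0"
proof -
  define S where "S = msqrt B"
  have S: "pos_semidef S" "S ** S = B" using msqrt[OF pd_psd[OF B]] by (auto simp: S_def)
  have sS: "sym_mat S" using S(1) by (simp add: pos_semidef_def)
  have "trace (B ** A) = trace (S ** (S ** A))" using S(2) by (simp add: matrix_mul_assoc)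
  also have "\<dots> = trace ((S ** A) ** S)" by (rule trace_mul_sym)
  also have "\<dots> = (\<Sum>k\<in>UNIV. (S *v axis k 1) \<bullet> (A *v (S *v axis k 1)))"
    unfolding trace_def entry_axis
    by (rule sum.cong) (simp_all add: sym_inner[OF sS] flip: matrix_vector_mul_assoc)
  also have "\<dots> > 0"
  proof (rule sum_pos)
    fix k :: 'n
    have "axis k (1::real) \<noteq> 0" by (simp add: axis_eq_0_iff)
    then have "axis k 1 \<bullet> (B *v axis k 1) > 0" using B by (simp add: pos_def_def)
    then have "B *v axis k (1::real) \<noteq> 0" by auto
    then have "S *v axis k 1 \<noteq> 0" using S(2) by (metis matrix_vector_mul_assoc matrix_vector_mult_0_right)
    then show "(S *v axis k 1) \<bullet> (A *v (S *v axis k 1)) > 0" using A by (simp add: pos_def_def)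
  qed auto
  finally show ?thesis .
qed

lemma msum_mv: "(\<Sum>k\<in>K. M k) *v (x::real^'n) = (\<Sum>k\<in>K. M k *v x)"
proof (induction K rule: infinite_finite_induct)
  case (infinite A) then show ?case by simp
next
  case empty then show ?case by simp
next
  case (insert a F) then show ?case by (simp add: matrix_vector_mult_add_rdistrib)
qed

lemma gram_mv: "gram_op M Z *v x = (\<Sum>k\<in>UNIV. trace (M k ** Z) *\<^sub>R (M k *v x))"
  unfolding gram_op_def msum_mv by (simp add: scaleR_matrix_vector_assoc)

lemma gram_pd:
  fixes M :: "'k::finite \<Rightarrow> real^'n^'n"
  assumes M: "\<And>k. pos_def (M k)" and Z: "pos_def Z"
  shows "pos_def (gram_op M Z)"
proof -
  have sM: "sym_mat (M k)" for k using M by (simp add: pos_def_def)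
  have "sym_mat (gram_op M Z)"
    by (rule sym_matI) (simp add: gram_mv inner_sum_right inner_sum_left sym_inner[OF sM])
  moreover have "x \<bullet> (gram_op M Z *v x) > 0" if "x \<noteq> 0" for x
    unfolding gram_mv inner_sum_right
  proof (rule sum_pos)
    fix k
    have "trace (M k ** Z) > 0" using trace_pos[OF Z M] .
    moreover have "x \<bullet> (M k *v x) > 0" using M that by (simp add: pos_def_def)
    ultimately show "x \<bullet> (trace (M k ** Z) *\<^sub>R (M k *v x)) > 0" by simp
  qed auto
  ultimately show ?thesis by (simp add: pos_def_def)
qed

lemma psd_sqrt_invertible:
  fixes G M :: "real^'n^'n"
  assumes "G ** G = M" "invertible M"
  shows "invertible G"
  using assms unfolding invertible_ker by (metis matrix_vector_mul_assoc matrix_vector_mult_0_right)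

lemma fix_kkt:
  fixes C D P :: "real^'n^'n"
  assumes C: "pos_def C" and D: "pos_def D"
    and fx: "D = geo_mean (matrix_inv C) D ** P ** geo_mean (matrix_inv C) D"
  shows "P = C"
proof -
  define M where "M = matrix_inv C"
  have Mpd: "pos_def M" using pd_inv[OF C] by (simp add: M_def)
  define G where "G = msqrt M"
  have G: "pos_semidef G" "G ** G = M" using msqrt[OF pd_psd[OF Mpd]] by (auto simp: G_def)
  have invC: "invertible C" using pd_invertible[OF C] .
  have GC: "G ** (G ** C) = mat 1" using G(2) inv_props(2)[OF invC] by (simp add: matrix_mul_assoc M_def)
  have invG: "invertible G" using GC invertible_right_inverse by blast
  have Gi: "matrix_inv G = G ** C" using GC by (rule inv_unique)
  define Gi where "Gi = matrix_inv G"
  have sG: "sym_mat G" using G(1) by (simp add: pos_semidef_def)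
  have sGi: "sym_mat Gi" using sym_inv[OF sG invG] by (simp add: Gi_def)
  have sD: "sym_mat D" using D by (simp add: pos_def_def)
  define H where "H = Gi ** D ** Gi"
  have Hpsd: "pos_semidef H"
  proof -
    have "sym_mat H" using sGi sD by (simp add: H_def sym_mat_def matrix_transpose_mul matrix_mul_assoc)
    moreover have "x \<bullet> (H *v x) \<ge> 0" for x
    proof -
      have "x \<bullet> (H *v x) = (Gi *v x) \<bullet> (D *v (Gi *v x))"
        by (simp add: H_def sym_inner[OF sGi] flip: matrix_vector_mul_assoc)
      also have "\<dots> \<ge> 0" using pd_psd[OF D] by (simp add: pos_semidef_def)
      finally show ?thesis .
    qed
    ultimately show ?thesis by (simp add: pos_semidef_def)
  qed
  have invH: "invertible H" unfolding H_def Gi_def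
    using invG pd_invertible[OF D] by (intro invertible_mult invertible_inv)
  define S where "S = msqrt H"
  have S: "pos_semidef S" "S ** S = H" using msqrt[OF Hpsd] by (auto simp: S_def)
  have invS: "invertible S" using psd_sqrt_invertible[OF S(2) invH] .
  define V where "V = G ** S ** G"
  have Vdef: "geo_mean (matrix_inv C) D = V"
    by (simp add: geo_mean_def V_def G_def M_def H_def Gi_def S_def)
  have invV: "invertible V" unfolding V_def using invG invS by (intro invertible_mult)
  have GCG: "G ** C ** G = mat 1" using Gi inv_props(2)[OF invG] by simp
  have "V ** C ** V = G ** S ** (G ** C ** G) ** S ** G"
    by (simp add: V_def matrix_mul_assoc)
  also have "\<dots> = G ** (S ** S) ** G" by (simp add: GCG matrix_mul_assoc)
  also have "\<dots> = G ** (Gi ** (D ** (Gi ** G)))" by (simp add: S(2) H_def matrix_mul_assoc)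
  also have "\<dots> = D" using inv_props(2)[OF invG] inv_cancel(1)[OF invG] by (simp add: Gi_def)
  finally have VCV: "V ** C ** V = D" .
  have VPV: "V ** P ** V = V ** C ** V" using fx VCV by (simp add: Vdef)
  have canc: "matrix_inv V ** (V ** X ** V) ** matrix_inv V = X" for X
  proof -
    have "matrix_inv V ** (V ** X ** V) ** matrix_inv V = (matrix_inv V ** V) ** X ** (V ** matrix_inv V)"
      by (simp add: matrix_mul_assoc)
    then show ?thesis using inv_props[OF invV] by simp
  qed
  have "P = matrix_inv V ** (V ** P ** V) ** matrix_inv V" by (rule canc[symmetric])
  also have "\<dots> = matrix_inv V ** (V ** C ** V) ** matrix_inv V" using VPV by simp
  also have "\<dots> = C" by (rule canc)
  finally show ?thesis .
qed

theorem theorem2: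
  fixes X :: "real^'n::finite^'m::finite"
    and A :: "'m \<Rightarrow> real^'r::finite^'r"
    and B :: "'n \<Rightarrow> real^'r^'r"
  assumes X_nonneg: "\<And>i j. X $ i $ j \<ge> 0"
    and A_pd: "\<And>i. pos_def (A i)"
    and B_pd: "\<And>j. pos_def (B j)"
    and A_fix: "\<And>i. A i = geo_mean (matrix_inv (gram_op B (A i))) (A i)
                         ** adj_op B (\<lambda>j. X $ i $ j)
                         ** geo_mean (matrix_inv (gram_op B (A i))) (A i)"
    and B_fix: "\<And>j. B j = geo_mean (matrix_inv (gram_op A (B j))) (B j)
                         ** adj_op A (\<lambda>i. X $ i $ j)
                         ** geo_mean (matrix_inv (gram_op A (B j))) (B j)"
  shows "(\<forall>i. adj_op B (\<lambda>j. X $ i $ j) = gram_op B (A i)) \<and>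
         (\<forall>j. adj_op A (\<lambda>i. X $ i $ j) = gram_op A (B j))"
  proof -
  have "adj_op B (\<lambda>j. X $ i $ j) = gram_op B (A i)" for i
    by (rule fix_kkt[OF gram_pd[OF B_pd A_pd] A_pd A_fix])
  moreover have "adj_op A (\<lambda>i. X $ i $ j) = gram_op A (B j)" for j
    by (rule fix_kkt[OF gram_pd[OF A_pd B_pd] B_pd B_fix])
  ultimately show ?thesis by blast
qed

end
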